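(* For every hypothesis class $\mathcal{H} \subseteq \{0,1\}^{\mathcal{X}}$ and every time horizon $T \in \mathbb{N}$, $$\frac{1}{8}\min\Bigl\{\max\Bigl\{\sqrt{(\operatorname{W}(\mathcal{H})-1)\,T},\ \operatorname{L}(\mathcal{H})\Bigr\},\ T\Bigr\} \;\le\; \inf_{\mathcal{A}} \operatorname{M}_{\mathcal{A}}(T,\mathcal{H}) \;\le\; \operatorname{AL}_{\operatorname{W}(\mathcal{H})}(\mathcal{H}) + 2\sqrt{(\operatorname{W}(\mathcal{H})-1)\,T},$$ where the infimum is over all (possibly randomized) online learners operating under apple tasting feedback.
   Context: Online binary classification: over rounds $t=1,\dots,T$, an adversary picks $(x_t,y_t)\in\mathcal{X}\times\{0,1\}$ and reveals $x_t$; the learner $\mathcal{A}$ (possibly randomized) outputs a prediction $\hat y_t=\mathcal{A}(x_t)\in\{0,1\}$ based on the history; under apple tasting feedback the learner observes $y_t$ only if $\hat y_t=1$. In the realizable setting, $\operatorname{M}_{\mathcal{A}}(T,\mathcal{H}) := \sup_{h\in\mathcal{H}}\sup_{x_1,\dots,x_T}\mathbb{E}\bigl[\sum_{t=1}^T \mathbb{1}\{\mathcal{A}(x_t)\neq h(x_t)\}\bigr]$ with $y_t=h(x_t)$, the expectation being over the learner's randomness. Apple Littlestone (AL) tree of width $w\in\mathbb{N}=\{1,2,\dots\}$ and depth $d$: call a binary string $u$ an internal node if $|u|<d$ and $u$ contains fewer than $w$ ones; the tree assigns an instance $x_u\in\mathcal{X}$ to every internal node. A path is a binary string $\sigma$ all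 of whose proper prefixes are internal nodes but which is not itself an internal node (so either $|\sigma|=d$ or $\sigma$ contains exactly $w$ ones). The tree is shattered by $\mathcal{H}$ if for every path $\sigma$ there is $h\in\mathcal{H}$ with $h(x_{(\sigma_1,\dots,\sigma_{i-1})})=\sigma_i$ for all $i\le|\sigma|$. (When $w\ge d$ this is a complete binary tree of depth $d$, i.e. a Littlestone tree.) The Littlestone dimension $\operatorname{L}(\mathcal{H})$ is the largest $d$ such that a complete binary (Littlestone) tree of depth $d$ is shattered by $\mathcal{H}$ ($\infty$ if arbitrarily large depths are shattered). The Apple Littlestone dimension $\operatorname{AL}_w(\mathcal{H})$ is the largest $d$ such that an AL tree of width $w$ and depth $d$ is shattered by $\mathcal{H}$; it is $\infty$ if arbitrarily large depths occur and $0$ if there is no shattered AL tree of width $w$. The Effective width $\operatorname{W}(\mathcal{H})$ is the smallest $w\in\mathbb{N}$ with $\operatorname{AL}_w(\mathcal{H})<\infty$, and $\infty$ if none exists. *)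

theory Defs
  imports "HOL-Probability.Probability"
begin

text \<open>A history entry records the revealed instance and the feedback: Some y if the
learner predicted 1 (so the label y was revealed), None if it predicted 0.
(The learner's own prediction is recoverable as feedback \<noteq> None.)\<close>
type_synonym 'x history = "('x \<times> bool option) list"

text \<open>A (possibly randomized) learner: given the history and the current instance it
outputs a distribution over predictions (behavioural randomisation; with perfect recall
of its own predictions this covers all randomized learners).\<close>
type_synonym 'x learner = "'x history \<Rightarrow> 'x \<Rightarrow> bool pmf"

fun mistakes_pmf :: "'x learner \<Rightarrow> ('x \<Rightarrow> bool) \<Rightarrow> 'x list \<Rightarrow> 'x history \<Rightarrow> nat pmf" where
  "mistakes_pmf A h [] hist = return_pmf 0"
| "mistakes_pmf A h (x # xs) hist =
     bind_pmf (A hist x) (\<lambda>yhat.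
       map_pmf (\<lambda>m. m + (if yhat \<noteq> h x then 1 else 0))
         (mistakes_pmf A h xs (hist @ [(x, if yhat then Some (h x) else None)])))"

definition expected_mistakes :: "'x learner \<Rightarrow> ('x \<Rightarrow> bool) \<Rightarrow> 'x list \<Rightarrow> ennreal" where
  "expected_mistakes A h xs = (\<integral>\<^sup>+ m. ennreal (real m) \<partial>measure_pmf (mistakes_pmf A h xs []))"

definition M :: "'x learner \<Rightarrow> nat \<Rightarrow> ('x \<Rightarrow> bool) set \<Rightarrow> ennreal" where
  "M A T H = (SUP h\<in>H. SUP xs\<in>{xs. length xs = T}. expected_mistakes A h xs)"

text \<open>Nodes are binary strings (bool lists, True = 1); a tree assigns instances to nodes.\<close>
definition internal_node :: "nat \<Rightarrow> nat \<Rightarrow> bool list \<Rightarrow> bool" where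
  "internal_node w d u \<longleftrightarrow> length u < d \<and> length (filter id u) < w"

definition AL_path :: "nat \<Rightarrow> nat \<Rightarrow> bool list \<Rightarrow> bool" where
  "AL_path w d \<sigma> \<longleftrightarrow> (\<forall>i<length \<sigma>. internal_node w d (take i \<sigma>)) \<and> \<not> internal_node w d \<sigma>"

definition AL_shattered :: "('x \<Rightarrow> bool) set \<Rightarrow> nat \<Rightarrow> nat \<Rightarrow> (bool list \<Rightarrow> 'x) \<Rightarrow> bool" where
  "AL_shattered H w d t \<longleftrightarrow>
     (\<forall>\<sigma>. AL_path w d \<sigma> \<longrightarrow> (\<exists>h\<in>H. \<forall>i<length \<sigma>. h (t (take i \<sigma>)) = \<sigma> ! i))"

definition AL_dim :: "nat \<Rightarrow> ('x \<Rightarrow> bool) set \<Rightarrow> enat" where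
  "AL_dim w H = Sup {enat d | d. \<exists>t. AL_shattered H w d t}"

definition L_shattered :: "('x \<Rightarrow> bool) set \<Rightarrow> nat \<Rightarrow> (bool list \<Rightarrow> 'x) \<Rightarrow> bool" where
  "L_shattered H d t \<longleftrightarrow>
     (\<forall>\<sigma>. length \<sigma> = d \<longrightarrow> (\<exists>h\<in>H. \<forall>i<length \<sigma>. h (t (take i \<sigma>)) = \<sigma> ! i))"

definition L_dim :: "('x \<Rightarrow> bool) set \<Rightarrow> enat" where
  "L_dim H = Sup {enat d | d. \<exists>t. L_shattered H d t}"

definition eff_width :: "('x \<Rightarrow> bool) set \<Rightarrow> enat" where
  "eff_width H = (if \<exists>w\<ge>1. AL_dim w H < \<infinity>
                  then enat (LEAST w. w \<ge> 1 \<and> AL_dim w H < \<infinity>) else \<infinity>)"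

definition sqrt_term :: "('x \<Rightarrow> bool) set \<Rightarrow> nat \<Rightarrow> ennreal" where
  "sqrt_term H T = (case eff_width H of
      enat w \<Rightarrow> ennreal (sqrt ((real w - 1) * real T)) | \<infinity> \<Rightarrow> \<infinity>)"

end

theory Submission
  imports Defs
begin
fun E1 :: "'x learner \<Rightarrow> ('x \<Rightarrow> bool) \<Rightarrow> 'x list \<Rightarrow> 'x history \<Rightarrow> real" where
  "E1 A h [] hist = 0"
| "E1 A h (x # xs) hist =
     pmf (A hist x) True * (of_bool (h x \<noteq> True) + E1 A h xs (hist @ [(x, Some (h x))]))
   + (1 - pmf (A hist x) True) * (of_bool (h x \<noteq> False) + E1 A h xs (hist @ [(x, None)]))"

lemma E1_nonneg: "0 \<le> E1 A h xs hist"
  by (induction xs arbitrary: hist) (auto intro!: add_nonneg_nonneg mult_nonneg_nonneg simp: pmf_le_1)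

lemma E1_le_length: "E1 A h xs hist \<le> length xs"
proof (induction xs arbitrary: hist)
  case Nil then show ?case by simp
next
  case (Cons x xs)
  let ?q = "pmf (A hist x) True"
  have q: "0 \<le> ?q" "?q \<le> 1" by (auto simp: pmf_le_1)
  have a: "of_bool (h x \<noteq> True) + E1 A h xs (hist @ [(x, Some (h x))]) \<le> 1 + length xs"
    using Cons[of "hist @ [(x, Some (h x))]"] by (cases "h x") auto
  have b: "of_bool (h x \<noteq> False) + E1 A h xs (hist @ [(x, None)]) \<le> 1 + length xs"
    using Cons[of "hist @ [(x, None)]"] by (cases "h x") auto
  have "E1 A h (x#xs) hist \<le> ?q * (1 + length xs) + (1 - ?q) * (1 + length xs)"
    by (simp only: E1.simps) (intro add_mono mult_left_mono a b; use q in simp)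
  also have "\<dots> = 1 + length xs" by (simp add: algebra_simps)
  finally show ?case by simp
qed

lemma E1_correct:
  "(\<integral>\<^sup>+ m. ennreal (real m) \<partial>measure_pmf (mistakes_pmf A h xs hist)) = ennreal (E1 A h xs hist)"
proof (induction xs arbitrary: hist)
  case Nil then show ?case by simp
next
  case (Cons x xs)
  define g where "g = (\<lambda>yhat. \<integral>\<^sup>+ m. ennreal (real (m + (if yhat \<noteq> h x then 1 else 0))) \<partial>measure_pmf
         (mistakes_pmf A h xs (hist @ [(x, if yhat then Some (h x) else None)])))"
  have g: "g yhat = ennreal (of_bool (yhat \<noteq> h x) + E1 A h xs (hist @ [(x, if yhat then Some (h x) else None)]))" for yhat
  proof -
    have "g yhat = (\<integral>\<^sup>+ m. ennreal (real m) + ennreal (of_bool (yhat \<noteq> h x)) \<partial>measure_pmf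
         (mistakes_pmf A h xs (hist @ [(x, if yhat then Some (h x) else None)])))"
      unfolding g_def by (intro nn_integral_cong) (simp add: ennreal_plus[symmetric] del: ennreal_plus)
    also have "\<dots> = ennreal (E1 A h xs (hist @ [(x, if yhat then Some (h x) else None)])) + ennreal (of_bool (yhat \<noteq> h x))"
      by (subst nn_integral_add) (simp_all add: Cons measure_pmf.emeasure_space_1)
    finally show ?thesis by (simp add: ennreal_plus[symmetric] E1_nonneg add.commute del: ennreal_plus)
  qed
  have "(\<integral>\<^sup>+ m. ennreal (real m) \<partial>measure_pmf (mistakes_pmf A h (x#xs) hist)) = (\<integral>\<^sup>+ yhat. g yhat \<partial>measure_pmf (A hist x))"
    unfolding g_def by (simp only: mistakes_pmf.simps nn_integral_bind_pmf nn_integral_map_pmf)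
  also have "\<dots> = (\<Sum>yhat\<in>UNIV. ennreal (pmf (A hist x) yhat) * g yhat)"
    unfolding nn_integral_measure_pmf by (rule nn_integral_count_space_finite) simp
  also have "\<dots> = ennreal (pmf (A hist x) True) * g True + ennreal (pmf (A hist x) False) * g False"
    by (simp add: UNIV_bool)
  also have "\<dots> = ennreal (E1 A h (x#xs) hist)"
    unfolding g E1.simps pmf_False_conv_True[of "A hist x"]
    by (cases "h x") (simp_all add: ennreal_mult[symmetric] ennreal_plus[symmetric] E1_nonneg pmf_le_1 del: ennreal_plus)
  finally show ?case .
qed

lemma internal_take_mono:
  assumes "\<forall>i<length \<rho>. internal_node w d (take i \<rho>)"
  shows "length \<rho> \<le> d"
proof (rule ccontr)
  assume "\<not> length \<rho> \<le> d"
  then have "d < length \<rho>" by simp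
  with assms have "internal_node w d (take d \<rho>)" by blast
  then show False using \<open>d < length \<rho>\<close> by (simp add: internal_node_def)
qed

lemma AL_ext:
  assumes sh: "AL_shattered H w d t" and pre: "\<forall>i<length \<rho>. internal_node w d (take i \<rho>)"
  shows "\<exists>h\<in>H. \<forall>i<length \<rho>. h (t (take i \<rho>)) = \<rho> ! i"
proof -
  have len: "length \<rho> \<le> d" using internal_take_mono[OF pre] .
  define \<rho>' where "\<rho>' = (if internal_node w d \<rho> then \<rho> @ replicate (d - length \<rho>) False else \<rho>)"
  have path: "AL_path w d \<rho>'"
  proof (cases "internal_node w d \<rho>")
    case True
    then have r: "\<rho>' = \<rho> @ replicate (d - length \<rho>) False" by (simp add: \<rho>'_def)
    have lr: "length \<rho>' = d" using len r by simp
    have "internal_node w d (take i \<rho>')" if "i < length \<rho>'" for i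
    proof (cases "i < length \<rho>")
      case True then show ?thesis using pre r by simp
    next
      case False
      then have "take i \<rho>' = \<rho> @ replicate (i - length \<rho>) False" using r that lr by (simp add: take_append)
      then show ?thesis using \<open>internal_node w d \<rho>\<close> that lr \<open>\<not> i < length \<rho>\<close>
        by (simp add: internal_node_def)
    qed
    moreover have "\<not> internal_node w d \<rho>'" using lr by (simp add: internal_node_def)
    ultimately show ?thesis by (simp add: AL_path_def)
  next
    case False
    then show ?thesis using pre by (simp add: AL_path_def \<rho>'_def)
  qed
  obtain h where h: "h \<in> H" "\<forall>i<length \<rho>'. h (t (take i \<rho>')) = \<rho>' ! i"
    using sh path unfolding AL_shattered_def by blast
  have "\<forall>i<length \<rho>. h (t (take i \<rho>)) = \<rho> ! i"
  proof (intro allI impI)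
    fix i assume i: "i < length \<rho>"
    have "length \<rho> \<le> length \<rho>'" by (simp add: \<rho>'_def)
    then have "h (t (take i \<rho>')) = \<rho>' ! i" using h i by simp
    moreover have "take i \<rho>' = take i \<rho>" "\<rho>' ! i = \<rho> ! i" using i
      by (auto simp: \<rho>'_def nth_append take_append)
    ultimately show "h (t (take i \<rho>)) = \<rho> ! i" by simp
  qed
  then show ?thesis using h by blast
qed

lemma AL_shattered_down:
  assumes "AL_shattered H w d t" "w' \<le> w" "d' \<le> d"
  shows "AL_shattered H w' d' t"
  unfolding AL_shattered_def
proof (intro allI impI)
  fix \<sigma> assume "AL_path w' d' \<sigma>"
  then have "\<forall>i<length \<sigma>. internal_node w d (take i \<sigma>)"
    using assms(2,3) by (auto simp: AL_path_def internal_node_def)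
  then show "\<exists>h\<in>H. \<forall>i<length \<sigma>. h (t (take i \<sigma>)) = \<sigma> ! i" using AL_ext[OF assms(1)] by blast
qed

lemma AL_shattered_mono: "AL_shattered V w d t \<Longrightarrow> V \<subseteq> V' \<Longrightarrow> AL_shattered V' w d t"
  unfolding AL_shattered_def by blast

lemma AL_dim_ge: "AL_shattered V w d t \<Longrightarrow> enat d \<le> AL_dim w V"
  unfolding AL_dim_def by (rule Sup_upper) blast

lemma AL_dim_mono: "V \<subseteq> V' \<Longrightarrow> AL_dim w V \<le> AL_dim w V'"
  unfolding AL_dim_def by (intro Sup_subset_mono) (blast intro: AL_shattered_mono)

lemma AL_shattered_0: "V \<noteq> {} \<Longrightarrow> AL_shattered V w 0 t"
  unfolding AL_shattered_def AL_path_def internal_node_def by auto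

lemma AL_dim_obtain:
  assumes "V \<noteq> {} \<or> 0 < D" "enat D \<le> AL_dim w V"
  shows "\<exists>t. AL_shattered V w D t"
proof (cases "D = 0")
  case True
  then show ?thesis using assms AL_shattered_0 by blast
next
  case False
  have "enat (D - 1) < enat D" using False by simp
  then have "enat (D - 1) < AL_dim w V" using assms(2) by (rule less_le_trans)
  then obtain s where "s \<in> {enat d | d. \<exists>t. AL_shattered V w d t}" "enat (D - 1) < s"
    unfolding AL_dim_def using less_Sup_iff by blast
  then obtain d t where "AL_shattered V w d t" "enat (D - 1) < enat d" by blast
  then have "AL_shattered V w d t" "D \<le> d" using False by auto
  then show ?thesis using AL_shattered_down by blast
qed

lemma L_AL: "L_shattered H d t = AL_shattered H d d t"
proof -
  have "AL_path d d \<sigma> = (length \<sigma> = d)" for \<sigma>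
  proof
    assume a: "AL_path d d \<sigma>"
    then have "length \<sigma> \<le> d" using internal_take_mono by (auto simp: AL_path_def)
    moreover have "\<not> length \<sigma> < d"
      using a length_filter_le[of id \<sigma>] by (auto simp: AL_path_def internal_node_def)
    ultimately show "length \<sigma> = d" by simp
  next
    assume "length \<sigma> = d"
    then show "AL_path d d \<sigma>"
    proof -
      assume l: "length \<sigma> = d"
      have "length (filter id (take i \<sigma>)) < d" if "i < d" for i
        using length_filter_le[of id "take i \<sigma>"] that l by simp
      then show ?thesis using l by (auto simp: AL_path_def internal_node_def)
    qed
  qed
  then show ?thesis unfolding L_shattered_def AL_shattered_def by simp
qed

lemma L_dim_obtain:
  assumes "0 < n" "enat n \<le> L_dim H"
  shows "\<exists>t. L_shattered H n t"
proof -
  have "enat (n - 1) < enat n" using assms by simp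
  then have "enat (n - 1) < L_dim H" using assms(2) by (rule less_le_trans)
  then obtain s where "s \<in> {enat d | d. \<exists>t. L_shattered H d t}" "enat (n - 1) < s"
    unfolding L_dim_def using less_Sup_iff by blast
  then obtain d t where "L_shattered H d t" "n \<le> d" using assms(1) by auto
  then show ?thesis using AL_shattered_down[of H d d t n n] L_AL by metis
qed

definition tcomb :: "'x \<Rightarrow> (bool list \<Rightarrow> 'x) \<Rightarrow> (bool list \<Rightarrow> 'x) \<Rightarrow> bool list \<Rightarrow> 'x" where
  "tcomb x t0 t1 u = (case u of [] \<Rightarrow> x | c # u' \<Rightarrow> if c then t1 u' else t0 u')"

lemma AL_combine:
  assumes t0: "AL_shattered {f\<in>V. \<not> f x} b D t0" and b1: "1 \<le> b"
  and one: "(b = 1 \<and> (\<exists>f\<in>V. f x)) \<or> (2 \<le> b \<and> AL_shattered {f\<in>V. f x} (b-1) D t1)"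
  shows "AL_shattered V b (Suc D) (tcomb x t0 t1)"
  unfolding AL_shattered_def
proof (intro allI impI)
  fix \<sigma> assume p: "AL_path b (Suc D) \<sigma>"
  have "internal_node b (Suc D) []" using b1 by (simp add: internal_node_def)
  then have "\<sigma> \<noteq> []" using p by (auto simp: AL_path_def)
  then obtain c \<tau> where \<sigma>: "\<sigma> = c # \<tau>" by (cases \<sigma>) auto
  have pre: "internal_node b (Suc D) (c # take i \<tau>)" if "i < length \<tau>" for i
  proof -
    have "Suc i < length \<sigma>" using that \<sigma> by simp
    then have "internal_node b (Suc D) (take (Suc i) \<sigma>)" using p by (simp add: AL_path_def)
    then show ?thesis using \<sigma> by simp
  qed
  have ni: "\<not> internal_node b (Suc D) (c # \<tau>)" using p \<sigma> by (simp add: AL_path_def)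
  show "\<exists>h\<in>V. \<forall>i<length \<sigma>. h (tcomb x t0 t1 (take i \<sigma>)) = \<sigma> ! i"
  proof (cases c)
    case False
    have "internal_node b D (take i \<tau>)" if "i < length \<tau>" for i
      using pre[OF that] False by (simp add: internal_node_def)
    moreover have "\<not> internal_node b D \<tau>" using ni False by (simp add: internal_node_def)
    ultimately have "AL_path b D \<tau>" by (simp add: AL_path_def)
    then obtain h where h: "h \<in> {f\<in>V. \<not> f x}" "\<forall>i<length \<tau>. h (t0 (take i \<tau>)) = \<tau> ! i"
      using t0 unfolding AL_shattered_def by blast
    have "\<forall>i<length \<sigma>. h (tcomb x t0 t1 (take i \<sigma>)) = \<sigma> ! i"
    proof (intro allI impI)
      fix i assume "i < length \<sigma>"
      then show "h (tcomb x t0 t1 (take i \<sigma>)) = \<sigma> ! i"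
        using h False \<sigma> by (cases i) (auto simp: tcomb_def)
    qed
    then show ?thesis using h by blast
  next
    case True
    show ?thesis
    proof (cases "b = 1")
      case b: True
      have "\<tau> = []"
      proof (rule ccontr)
        assume "\<tau> \<noteq> []"
        then have "internal_node b (Suc D) (c # take 0 \<tau>)" using pre by blast
        then show False using b True by (simp add: internal_node_def)
      qed
      obtain f where "f \<in> V" "f x" using one b by auto
      then show ?thesis using \<sigma> \<open>\<tau> = []\<close> True by (auto simp: tcomb_def)
    next
      case b: False
      then have t1: "AL_shattered {f\<in>V. f x} (b-1) D t1" using one by auto
      have "internal_node (b-1) D (take i \<tau>)" if "i < length \<tau>" for i
        using pre[OF that] True by (simp add: internal_node_def less_diff_conv)
      moreover have "\<not> internal_node (b-1) D \<tau>" using ni True b1 by (simp add: internal_node_def less_diff_conv)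
      ultimately have "AL_path (b-1) D \<tau>" by (simp add: AL_path_def)
      then obtain h where h: "h \<in> {f\<in>V. f x}" "\<forall>i<length \<tau>. h (t1 (take i \<tau>)) = \<tau> ! i"
        using t1 unfolding AL_shattered_def by blast
      have "\<forall>i<length \<sigma>. h (tcomb x t0 t1 (take i \<sigma>)) = \<sigma> ! i"
      proof (intro allI impI)
        fix i assume "i < length \<sigma>"
        then show "h (tcomb x t0 t1 (take i \<sigma>)) = \<sigma> ! i"
          using h True \<sigma> by (cases i) (auto simp: tcomb_def)
      qed
      then show ?thesis using h by blast
    qed
  qed
qed

lemma AL_step:
  assumes D: "AL_dim b V = enat D" and b1: "1 \<le> b"
  and ne0: "{f\<in>V. \<not> f x} \<noteq> {}" and ge0: "\<not> AL_dim b {f\<in>V. \<not> f x} < AL_dim b V"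
  and hx: "h \<in> V" "h x"
  shows "2 \<le> b \<and> AL_dim (b-1) {f\<in>V. f x} < enat D"
proof -
  have "enat D \<le> AL_dim b {f\<in>V. \<not> f x}" using ge0 D by simp
  then obtain t0 where t0: "AL_shattered {f\<in>V. \<not> f x} b D t0"
    using AL_dim_obtain[OF disjI1[OF ne0]] by blast
  have ne1: "{f\<in>V. f x} \<noteq> {}" using hx by blast
  show ?thesis
  proof (rule ccontr)
    assume nt: "\<not> ?thesis"
    obtain t1 where "(b = 1 \<and> (\<exists>f\<in>V. f x)) \<or> (2 \<le> b \<and> AL_shattered {f\<in>V. f x} (b-1) D t1)"
    proof (cases "b = 1")
      case True then show ?thesis using that hx by blast
    next
      case False
      then have "2 \<le> b" using b1 by simp
      then have "enat D \<le> AL_dim (b-1) {f\<in>V. f x}" using nt by (simp add: not_less)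
      then obtain t1 where "AL_shattered {f\<in>V. f x} (b-1) D t1"
        using AL_dim_obtain[OF disjI1[OF ne1]] by blast
      then show ?thesis using that \<open>2 \<le> b\<close> by blast
    qed
    then have "AL_shattered V b (Suc D) (tcomb x t0 t1)" by (rule AL_combine[OF t0 b1])
    then have "enat (Suc D) \<le> AL_dim b V" by (rule AL_dim_ge)
    then show False using D by simp
  qed
qed

definition cnd :: "('x \<Rightarrow> bool) set \<Rightarrow> nat \<Rightarrow> 'x \<Rightarrow> bool" where
  "cnd V b x \<longleftrightarrow> {f\<in>V. \<not> f x} = {} \<or> AL_dim b {f\<in>V. \<not> f x} < AL_dim b V"

fun stp :: "('x \<Rightarrow> bool) set \<times> nat \<Rightarrow> 'x \<times> bool option \<Rightarrow> ('x \<Rightarrow> bool) set \<times> nat" where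
  "stp (V, b) (x, None) = (V, b)"
| "stp (V, b) (x, Some y) = (if y \<and> \<not> cnd V b x then ({f\<in>V. f x}, b - 1) else ({f\<in>V. f x = y}, b))"

definition st :: "('x \<Rightarrow> bool) set \<Rightarrow> nat \<Rightarrow> 'x history \<Rightarrow> ('x \<Rightarrow> bool) set \<times> nat" where
  "st H w hist = foldl stp (H, w) hist"

definition lrn :: "('x \<Rightarrow> bool) set \<Rightarrow> nat \<Rightarrow> real \<Rightarrow> 'x learner" where
  "lrn H w p hist x = (case st H w hist of (V, b) \<Rightarrow> if cnd V b x then return_pmf True else bernoulli_pmf p)"

lemma st_snoc: "st H w (hist @ [e]) = stp (st H w hist) e"
  by (simp add: st_def)

lemma dim_fin:
  assumes "AL_dim b V' \<le> enat D" obtains D' where "AL_dim b V' = enat D'" "D' \<le> D"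
  using assms by (cases "AL_dim b V'") auto

lemma up_bound:
  assumes "st H w hist = (V, b)" "h \<in> V" "1 \<le> b" "2 \<le> b \<longrightarrow> 0 < p" "0 \<le> p" "p \<le> 1"
    "AL_dim b V = enat D"
  shows "E1 (lrn H w p) h xs hist \<le> real D + p * length xs + real (b - 1) / p"
  using assms
proof (induction xs arbitrary: hist V b D)
  case Nil
  then show ?case by simp
next
  case (Cons x xs)
  note st = Cons.prems(1) and hV = Cons.prems(2) and b1 = Cons.prems(3) and pp = Cons.prems(4)
    and p0 = Cons.prems(5) and p1 = Cons.prems(6) and D = Cons.prems(7)
  let ?A = "lrn H w p"
  let ?n = "real (length xs)"
  let ?c = "real (b - 1) / p"
  have c0: "0 \<le> ?c" using p0 by simp
  show ?case
  proof (cases "cnd V b x")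
    case True
    then have q: "pmf (?A hist x) True = 1" by (simp add: lrn_def st)
    show ?thesis
    proof (cases "h x")
      case hx: True
      have st': "st H w (hist @ [(x, Some (h x))]) = ({f\<in>V. f x}, b)"
        using True hx by (simp add: st_snoc st)
      have "AL_dim b {f\<in>V. f x} \<le> enat D" using D AL_dim_mono[of "{f\<in>V. f x}" V b] by auto
      then obtain D' where D': "AL_dim b {f\<in>V. f x} = enat D'" "D' \<le> D" by (rule dim_fin)
      have "E1 ?A h xs (hist @ [(x, Some (h x))]) \<le> real D' + p * ?n + ?c"
        using Cons.IH[OF st' _ b1 pp p0 p1 D'(1)] hV hx by simp
      moreover have "real D' \<le> real D" using D'(2) by simp
      ultimately have "E1 ?A h xs (hist @ [(x, Some (h x))]) \<le> real D + p * ?n + ?c" by linarith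
      then show ?thesis using q hx p0 by (simp add: algebra_simps)
    next
      case hx: False
      have st': "st H w (hist @ [(x, Some (h x))]) = ({f\<in>V. \<not> f x}, b)"
        using True hx by (simp add: st_snoc st)
      have ne: "{f\<in>V. \<not> f x} \<noteq> {}" using hV hx by blast
      have "{f\<in>V. \<not> f x} = {} \<or> AL_dim b {f\<in>V. \<not> f x} < AL_dim b V" using True by (simp only: cnd_def)
      then have "AL_dim b {f\<in>V. \<not> f x} < AL_dim b V" using ne by blast
      then have "AL_dim b {f\<in>V. \<not> f x} < enat D" using D by simp
      then obtain D' where D': "AL_dim b {f\<in>V. \<not> f x} = enat D'" "D' < D"
        by (cases "AL_dim b {f\<in>V. \<not> f x}") auto
      have "E1 ?A h xs (hist @ [(x, Some (h x))]) \<le> real D' + p * ?n + ?c"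
        using Cons.IH[OF st' _ b1 pp p0 p1 D'(1)] hV hx by simp
      moreover have "real D' + 1 \<le> real D" using D'(2) by simp
      ultimately have "1 + E1 ?A h xs (hist @ [(x, Some (h x))]) \<le> real D + p * ?n + ?c" by linarith
      then show ?thesis using q hx p0 by (simp add: algebra_simps)
    qed
  next
    case False
    then have q: "pmf (?A hist x) True = p" by (simp add: lrn_def st p0 p1)
    have stN: "st H w (hist @ [(x, None)]) = (V, b)" by (simp add: st_snoc st)
    have IHN: "E1 ?A h xs (hist @ [(x, None)]) \<le> real D + p * ?n + ?c"
      using Cons.IH[OF stN hV b1 pp p0 p1 D] .
    show ?thesis
    proof (cases "h x")
      case hx: False
      have st': "st H w (hist @ [(x, Some (h x))]) = ({f\<in>V. \<not> f x}, b)"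
        using hx by (simp add: st_snoc st)
      have "AL_dim b {f\<in>V. \<not> f x} \<le> enat D" using D AL_dim_mono[of "{f\<in>V. \<not> f x}" V b] by auto
      then obtain D' where D': "AL_dim b {f\<in>V. \<not> f x} = enat D'" "D' \<le> D" by (rule dim_fin)
      have "E1 ?A h xs (hist @ [(x, Some (h x))]) \<le> real D' + p * ?n + ?c"
        using Cons.IH[OF st' _ b1 pp p0 p1 D'(1)] hV hx by simp
      moreover have "real D' \<le> real D" using D'(2) by simp
      ultimately have a: "E1 ?A h xs (hist @ [(x, Some (h x))]) \<le> real D + p * ?n + ?c" by linarith
      have "E1 ?A h (x # xs) hist = p * (1 + E1 ?A h xs (hist @ [(x, Some (h x))]))
            + (1 - p) * E1 ?A h xs (hist @ [(x, None)])" using q hx by simp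
      also have "\<dots> \<le> p * (1 + (real D + p * ?n + ?c)) + (1 - p) * (real D + p * ?n + ?c)"
        by (intro add_mono mult_left_mono IHN) (use a p0 p1 in auto)
      also have "\<dots> = (real D + p * ?n + ?c) + p"
        using mult_1_right[of p] by (simp only: distrib_left left_diff_distrib)
      also have "\<dots> = real D + p * real (length (x # xs)) + ?c" by (simp add: algebra_simps)
      finally show ?thesis .
    next
      case hx: True
      have ne: "{f\<in>V. \<not> f x} \<noteq> {}" and ge: "\<not> AL_dim b {f\<in>V. \<not> f x} < AL_dim b V"
        using False by (auto simp: cnd_def)
      from AL_step[OF D b1 ne ge hV hx]
      have b2: "2 \<le> b" and lt: "AL_dim (b - 1) {f\<in>V. f x} < enat D" by auto
      then obtain D' where D': "AL_dim (b-1) {f\<in>V. f x} = enat D'" "D' < D"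
        by (cases "AL_dim (b-1) {f\<in>V. f x}") auto
      have pos: "0 < p" using pp b2 by simp
      have st': "st H w (hist @ [(x, Some (h x))]) = ({f\<in>V. f x}, b - 1)"
        using hx False by (simp add: st_snoc st)
      have "E1 ?A h xs (hist @ [(x, Some (h x))]) \<le> real D' + p * ?n + real (b - 1 - 1) / p"
        using Cons.IH[OF st' _ _ _ p0 p1 D'(1)] hV hx b2 pos by simp
      moreover have "real D' \<le> real D" using D'(2) by simp
      moreover have "real (b - 1 - 1) = real (b - 1) - 1" using b2 by (simp add: of_nat_diff)
      ultimately have a: "E1 ?A h xs (hist @ [(x, Some (h x))]) \<le> real D + p * ?n + (real (b - 1) - 1) / p"
        by simp
      have "E1 ?A h (x # xs) hist = p * E1 ?A h xs (hist @ [(x, Some (h x))])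
            + (1 - p) * (1 + E1 ?A h xs (hist @ [(x, None)]))" using q hx by simp
      also have "\<dots> \<le> p * (real D + p * ?n + (real (b - 1) - 1) / p) + (1 - p) * (1 + (real D + p * ?n + ?c))"
        by (intro add_mono mult_left_mono a) (use IHN p0 p1 in auto)
      also have "\<dots> = real D + p * real (length (x # xs)) + ?c - 2 * p"
        using pos by (simp add: field_simps)
      also have "\<dots> \<le> real D + p * real (length (x # xs)) + ?c" using p0 by simp
      finally show ?thesis .
    qed
  qed
qed

lemma M_le:
  assumes "\<And>h xs. h \<in> H \<Longrightarrow> length xs = T \<Longrightarrow> E1 A h xs [] \<le> B"
  shows "M A T H \<le> ennreal B"
  unfolding M_def expected_mistakes_def E1_correct
  by (intro SUP_least) (auto intro: ennreal_leI assms)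

lemma sqrt_calc:
  assumes "0 < a" "0 < (T::real)"
  shows "sqrt (a / T) * T + a / sqrt (a / T) = 2 * sqrt (a * T)"
proof -
  have s: "0 < sqrt a" "0 < sqrt T" using assms by auto
  have "sqrt (a / T) * T + a / sqrt (a / T) = sqrt a / sqrt T * (sqrt T * sqrt T) + (sqrt a * sqrt a) / (sqrt a / sqrt T)"
    using assms by (simp add: real_sqrt_divide)
  also have "\<dots> = 2 * (sqrt a * sqrt T)" using s by (simp add: field_simps)
  finally show ?thesis by (simp add: real_sqrt_mult)
qed

lemma upper_final:
  fixes H :: "('x \<Rightarrow> bool) set"
  assumes w1: "1 \<le> w" and d: "AL_dim w H = enat d" and T1: "1 \<le> T"
  shows "\<exists>A. M A T H \<le> ennreal (real d + 2 * sqrt ((real w - 1) * real T))"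
proof (cases "real w - 1 \<le> real T")
  case False
  have "M (lrn H w 0) T H \<le> ennreal (real d + 2 * sqrt ((real w - 1) * real T))"
  proof (rule M_le)
    fix h and xs :: "'x list" assume "length xs = T"
    then have "E1 (lrn H w 0) h xs [] \<le> real T" using E1_le_length by metis
    also have "real T = sqrt (real T * real T)" by simp
    also have "\<dots> \<le> sqrt ((real w - 1) * real T)" using False by (intro real_sqrt_le_mono mult_right_mono) auto
    also have "\<dots> \<le> real d + 2 * sqrt ((real w - 1) * real T)"
    proof -
      have "0 \<le> sqrt ((real w - 1) * real T)" using w1 by simp
      then show ?thesis by linarith
    qed
    finally show "E1 (lrn H w 0) h xs [] \<le> real d + 2 * sqrt ((real w - 1) * real T)" .
  qed
  then show ?thesis by blast
next
  case True
  define p where "p = sqrt ((real w - 1) / real T)"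
  have p0: "0 \<le> p" using w1 by (simp add: p_def)
  have p1: "p \<le> 1" using True T1 by (simp add: p_def)
  have pp: "2 \<le> w \<longrightarrow> 0 < p" using T1 by (auto simp: p_def)
  have bound: "real d + p * real T + real (w - 1) / p = real d + 2 * sqrt ((real w - 1) * real T)"
  proof (cases "w = 1")
    case True then show ?thesis by (simp add: p_def)
  next
    case False
    then have "0 < real w - 1" using w1 by simp
    moreover have "real (w - 1) = real w - 1" using w1 by (simp add: of_nat_diff)
    ultimately show ?thesis using sqrt_calc[of "real w - 1" "real T"] T1 by (simp add: p_def)
  qed
  have "M (lrn H w p) T H \<le> ennreal (real d + 2 * sqrt ((real w - 1) * real T))"
  proof (rule M_le)
    fix h and xs :: "'x list" assume "h \<in> H" "length xs = T"
    then have "E1 (lrn H w p) h xs [] \<le> real d + p * real T + real (w - 1) / p"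
      using up_bound[of H w "[]" H w h p d xs] w1 pp p0 p1 d by (simp add: st_def)
    then show "E1 (lrn H w p) h xs [] \<le> real d + 2 * sqrt ((real w - 1) * real T)" using bound by simp
  qed
  then show ?thesis by blast
qed

datatype 'x adv = Done | Play 'x bool "'x adv" | Mix real "'x adv" "'x adv"

fun val :: "'x learner \<Rightarrow> 'x adv \<Rightarrow> 'x history \<Rightarrow> real" where
  "val A Done hist = 0"
| "val A (Play x y a) hist =
     pmf (A hist x) True * (of_bool (y \<noteq> True) + val A a (hist @ [(x, Some y)]))
   + (1 - pmf (A hist x) True) * (of_bool (y \<noteq> False) + val A a (hist @ [(x, None)]))"
| "val A (Mix \<alpha> a b) hist = \<alpha> * val A a hist + (1 - \<alpha>) * val A b hist"

fun app :: "('x \<times> bool) list \<Rightarrow> 'x adv \<Rightarrow> 'x adv" where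
  "app [] a = a"
| "app ((x, y) # zs) a = Play x y (app zs a)"

fun branches :: "'x adv \<Rightarrow> ('x \<times> bool) list set" where
  "branches Done = {[]}"
| "branches (Play x y a) = (\<lambda>zs. (x, y) # zs) ` branches a"
| "branches (Mix \<alpha> a b) = branches a \<union> branches b"

fun wfa :: "'x adv \<Rightarrow> bool" where
  "wfa Done = True"
| "wfa (Play x y a) = wfa a"
| "wfa (Mix \<alpha> a b) = (0 \<le> \<alpha> \<and> \<alpha> \<le> 1 \<and> wfa a \<and> wfa b)"

lemma app_append: "app (xs @ ys) a = app xs (app ys a)"
proof (induction xs)
  case Nil then show ?case by simp
next
  case (Cons z xs) then show ?case by (cases z) simp
qed

lemma branches_app: "branches (app pre a) = (\<lambda>zs. pre @ zs) ` branches a"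
  by (induction pre a rule: app.induct) (auto simp: image_image)

lemma wfa_app: "wfa (app pre a) = wfa a"
  by (induction pre a rule: app.induct) auto

lemma val_pure: "val A (app (map (\<lambda>x. (x, h x)) xs) Done) hist = E1 A h xs hist"
  by (induction xs arbitrary: hist) auto

lemma val_app_Mix:
  "val A (app pre (Mix \<alpha> a b)) hist = \<alpha> * val A (app pre a) hist + (1 - \<alpha>) * val A (app pre b) hist"
proof (induction pre arbitrary: hist)
  case Nil then show ?case by simp
next
  case (Cons z pre)
  obtain x y where z: "z = (x, y)" by (cases z)
  show ?case by (simp add: z Cons.IH algebra_simps)
qed

lemma branch_exists:
  assumes "wfa a"
  shows "\<exists>zs\<in>branches a. val A (app pre a) hist \<le> val A (app (pre @ zs) Done) hist"
  using assms
proof (induction a arbitrary: pre)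
  case Done
  then show ?case by simp
next
  case (Play x y a)
  obtain zs where "zs \<in> branches a" "val A (app (pre @ [(x, y)]) a) hist \<le> val A (app ((pre @ [(x, y)]) @ zs) Done) hist"
    using Play by fastforce
  then show ?case by (auto simp: app_append)
next
  case (Mix \<alpha> a b)
  obtain zs1 where z1: "zs1 \<in> branches a" "val A (app pre a) hist \<le> val A (app (pre @ zs1) Done) hist"
    using Mix by fastforce
  obtain zs2 where z2: "zs2 \<in> branches b" "val A (app pre b) hist \<le> val A (app (pre @ zs2) Done) hist"
    using Mix by fastforce
  have al: "0 \<le> \<alpha>" "\<alpha> \<le> 1" using Mix by auto
  let ?v1 = "val A (app (pre @ zs1) Done) hist" and ?v2 = "val A (app (pre @ zs2) Done) hist"
  have "val A (app pre (Mix \<alpha> a b)) hist \<le> \<alpha> * ?v1 + (1 - \<alpha>) * ?v2"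
    unfolding val_app_Mix using al z1 z2 by (intro add_mono mult_left_mono) auto
  also have "\<dots> \<le> \<alpha> * max ?v1 ?v2 + (1 - \<alpha>) * max ?v1 ?v2"
    using al by (intro add_mono mult_left_mono) auto
  also have "\<dots> = max ?v1 ?v2" by (simp add: algebra_simps)
  finally show ?case using z1 z2 by (auto simp: max_def split: if_splits)
qed

lemma val_lb:
  assumes "\<And>h. c \<le> val A a h"
  shows "c \<le> val A (app pre a) hist"
proof (induction pre arbitrary: hist)
  case Nil then show ?case using assms by simp
next
  case (Cons z pre)
  obtain x y where z: "z = (x, y)" by (cases z)
  let ?q = "pmf (A hist x) True"
  have q: "0 \<le> ?q" "?q \<le> 1" by (auto simp: pmf_le_1)
  have "c = ?q * c + (1 - ?q) * c" by (simp add: algebra_simps)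
  also have "\<dots> \<le> ?q * (of_bool (y \<noteq> True) + val A (app pre a) (hist @ [(x, Some y)]))
      + (1 - ?q) * (of_bool (y \<noteq> False) + val A (app pre a) (hist @ [(x, None)]))"
    using q by (intro add_mono mult_left_mono) (auto intro!: add_increasing Cons)
  finally show ?case by (simp add: z)
qed

lemma E1_append: "E1 A h xs hist \<le> E1 A h (xs @ ys) hist"
proof (induction xs arbitrary: hist)
  case Nil then show ?case by (simp add: E1_nonneg)
next
  case (Cons x xs)
  let ?q = "pmf (A hist x) True"
  have q: "0 \<le> ?q" "?q \<le> 1" by (auto simp: pmf_le_1)
  show ?case using q Cons by (simp only: E1.simps append_Cons) (intro add_mono mult_left_mono; simp)
qed

lemma block:
  assumes c1: "\<And>h. c1 \<le> val A a1 h" and c0: "\<And>h. c0 \<le> val A a0 h" and al: "0 \<le> \<alpha>" "\<alpha> \<le> 1"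
  shows "\<alpha> * c1 + (1 - \<alpha>) * c0 + min (1 - \<alpha>) (\<alpha> * real n)
     \<le> \<alpha> * val A (app (replicate n (x, True)) a1) hist + (1 - \<alpha>) * val A (app (replicate n (x, False)) a0) hist"
proof (induction n arbitrary: hist)
  case 0
  have "min (1 - \<alpha>) (\<alpha> * real 0) = 0" using al by simp
  then show ?case using c1 c0 al by (simp, intro add_mono mult_left_mono) auto
next
  case (Suc n)
  let ?q = "pmf (A hist x) True"
  have q: "0 \<le> ?q" "?q \<le> 1" by (auto simp: pmf_le_1)
  let ?base = "\<alpha> * c1 + (1 - \<alpha>) * c0"
  let ?m1 = "min (1 - \<alpha>) (\<alpha> * real (Suc n))"
  define V1 where "V1 = val A (app (replicate n (x, True)) a1) (hist @ [(x, Some True)])"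
  define V0 where "V0 = val A (app (replicate n (x, False)) a0) (hist @ [(x, Some False)])"
  define B1 where "B1 = val A (app (replicate n (x, True)) a1) (hist @ [(x, None)])"
  define B0 where "B0 = val A (app (replicate n (x, False)) a0) (hist @ [(x, None)])"
  have V1: "c1 \<le> V1" unfolding V1_def by (rule val_lb) (rule c1)
  have V0: "c0 \<le> V0" unfolding V0_def by (rule val_lb) (rule c0)
  have IH: "?base + min (1 - \<alpha>) (\<alpha> * real n) \<le> \<alpha> * B1 + (1 - \<alpha>) * B0"
    unfolding B1_def B0_def by (rule Suc)
  have mm: "?m1 \<le> \<alpha> + min (1 - \<alpha>) (\<alpha> * real n)" using al by (auto simp: min_def algebra_simps)
  have A: "?base + ?m1 \<le> \<alpha> * V1 + (1 - \<alpha>) * (1 + V0)"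
  proof -
    have "\<alpha> * c1 \<le> \<alpha> * V1" using V1 al by (intro mult_left_mono) auto
    moreover have "(1 - \<alpha>) * (c0 + 1) \<le> (1 - \<alpha>) * (1 + V0)" using V0 al by (intro mult_left_mono) auto
    moreover have "?m1 \<le> 1 - \<alpha>" by simp
    ultimately show ?thesis by (simp add: algebra_simps)
  qed
  have B: "?base + ?m1 \<le> \<alpha> + \<alpha> * B1 + (1 - \<alpha>) * B0" using IH mm by linarith
  have "?base + ?m1 = ?q * (?base + ?m1) + (1 - ?q) * (?base + ?m1)" by (simp add: algebra_simps)
  also have "\<dots> \<le> ?q * (\<alpha> * V1 + (1 - \<alpha>) * (1 + V0)) + (1 - ?q) * (\<alpha> + \<alpha> * B1 + (1 - \<alpha>) * B0)"
    by (rule add_mono; rule mult_left_mono) (use q A B in auto)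
  also have "\<dots> = \<alpha> * (?q * V1 + (1 - ?q) * (1 + B1)) + (1 - \<alpha>) * (?q * (1 + V0) + (1 - ?q) * B0)"
    by (simp add: algebra_simps)
  also have "\<dots> = \<alpha> * val A (app (replicate (Suc n) (x, True)) a1) hist
      + (1 - \<alpha>) * val A (app (replicate (Suc n) (x, False)) a0) hist"
    by (simp add: V1_def V0_def B1_def B0_def)
  finally show ?case .
qed

primrec advr :: "(bool list \<Rightarrow> 'x) \<Rightarrow> nat \<Rightarrow> real \<Rightarrow> nat \<Rightarrow> (bool list \<Rightarrow> 'x adv) \<Rightarrow> bool list \<Rightarrow> 'x adv" where
  "advr t m \<alpha> 0 N u = N u"
| "advr t m \<alpha> (Suc r) N u = Mix \<alpha> (app (replicate m (t u, True)) (N (u @ [True])))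
                                 (app (replicate m (t u, False)) (advr t m \<alpha> r N (u @ [False])))"

primrec advP :: "(bool list \<Rightarrow> 'x) \<Rightarrow> nat \<Rightarrow> real \<Rightarrow> nat \<Rightarrow> bool list \<Rightarrow> 'x adv" where
  "advP t m \<alpha> 0 u = Done"
| "advP t m \<alpha> (Suc p) u = advr t m \<alpha> m (advP t m \<alpha> p) u"

lemma wfa_advr: "(\<And>v. wfa (N v)) \<Longrightarrow> 0 \<le> \<alpha> \<Longrightarrow> \<alpha> \<le> 1 \<Longrightarrow> wfa (advr t m \<alpha> r N u)"
  by (induction r arbitrary: u) (auto simp: wfa_app)

lemma wfa_advP: "0 \<le> \<alpha> \<Longrightarrow> \<alpha> \<le> 1 \<Longrightarrow> wfa (advP t m \<alpha> p u)"
  by (induction p arbitrary: u) (auto intro: wfa_advr)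

lemma val_advr:
  assumes m: "1 \<le> m" and al: "\<alpha> = 1 / (2 * real m)" and N: "\<And>v h. c \<le> val A (N v) h"
  shows "r \<le> m \<Longrightarrow> c + real r / 3 \<le> val A (advr t m \<alpha> r N u) hist"
proof (induction r arbitrary: u hist)
  case 0 then show ?case using N by simp
next
  case (Suc r)
  have a0: "0 \<le> \<alpha>" "\<alpha> \<le> 1" using al m by auto
  have IH: "\<And>h. c + real r / 3 \<le> val A (advr t m \<alpha> r N (u @ [False])) h" using Suc by simp
  have "\<alpha> * c + (1 - \<alpha>) * (c + real r / 3) + min (1 - \<alpha>) (\<alpha> * real m)
     \<le> \<alpha> * val A (app (replicate m (t u, True)) (N (u @ [True]))) hist
       + (1 - \<alpha>) * val A (app (replicate m (t u, False)) (advr t m \<alpha> r N (u @ [False]))) hist"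
    by (rule block[OF N IH a0])
  moreover have "\<alpha> * real m = 1/2" unfolding al using m by simp
  moreover have "1/2 \<le> 1 - \<alpha>" unfolding al using m by (simp add: field_simps)
  moreover have "\<alpha> * real r \<le> 1/2" unfolding al using m Suc.prems by (simp add: field_simps)
  moreover have "\<alpha> * c + (1 - \<alpha>) * (c + real r / 3) = c + real r / 3 - (\<alpha> * real r) / 3"
    by (simp add: field_simps)
  moreover have "real (Suc r) / 3 = real r / 3 + 1 / 3" by (simp add: add_divide_distrib)
  ultimately have "c + real (Suc r) / 3 \<le> \<alpha> * val A (app (replicate m (t u, True)) (N (u @ [True]))) hist
       + (1 - \<alpha>) * val A (app (replicate m (t u, False)) (advr t m \<alpha> r N (u @ [False]))) hist"
    by (simp only: min_def split: if_splits)
  then show ?case by simp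
qed

lemma val_advP:
  assumes m: "1 \<le> m" and al: "\<alpha> = 1 / (2 * real m)"
  shows "real m * real p / 3 \<le> val A (advP t m \<alpha> p u) hist"
proof (induction p arbitrary: u hist)
  case 0 then show ?case by simp
next
  case (Suc p)
  have "real m * real p / 3 + real m / 3 \<le> val A (advr t m \<alpha> m (advP t m \<alpha> p) u) hist"
    by (rule val_advr[OF m al]) (use Suc in auto)
  then show ?case by (simp add: algebra_simps add_divide_distrib)
qed

definition pathok :: "nat \<Rightarrow> nat \<Rightarrow> (bool list \<Rightarrow> 'x) \<Rightarrow> bool list \<Rightarrow> ('x \<times> bool) list \<Rightarrow> bool" where
  "pathok w d t u zs \<longleftrightarrow> (\<exists>v. (\<forall>i. length u \<le> i \<and> i < length (u @ v) \<longrightarrow> internal_node w d (take i (u @ v)))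
     \<and> (\<forall>z\<in>set zs. \<exists>i. length u \<le> i \<and> i < length (u @ v) \<and> z = (t (take i (u @ v)), (u @ v) ! i)))"

definition ones :: "bool list \<Rightarrow> nat" where "ones u = length (filter id u)"

lemma pathok_step:
  assumes int: "internal_node w d u" and ok: "pathok w d t (u @ [c]) zs"
  shows "pathok w d t u (replicate m (t u, c) @ zs)"
proof -
  obtain v where v1: "\<forall>i. length (u @ [c]) \<le> i \<and> i < length ((u @ [c]) @ v) \<longrightarrow> internal_node w d (take i ((u @ [c]) @ v))"
    and v2: "\<forall>z\<in>set zs. \<exists>i. length (u @ [c]) \<le> i \<and> i < length ((u @ [c]) @ v) \<and> z = (t (take i ((u @ [c]) @ v)), ((u @ [c]) @ v) ! i)"
    using ok unfolding pathok_def by blast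
  have e: "(u @ [c]) @ v = u @ (c # v)" by simp
  have "\<forall>i. length u \<le> i \<and> i < length (u @ (c # v)) \<longrightarrow> internal_node w d (take i (u @ (c # v)))"
  proof (intro allI impI)
    fix i assume i: "length u \<le> i \<and> i < length (u @ (c # v))"
    show "internal_node w d (take i (u @ (c # v)))"
    proof (cases "i = length u")
      case True then show ?thesis using int by simp
    next
      case False then show ?thesis using v1 i e by (metis Suc_leI append_Cons append_Nil length_append_singleton le_neq_implies_less)
    qed
  qed
  moreover have "\<forall>z\<in>set (replicate m (t u, c) @ zs). \<exists>i. length u \<le> i \<and> i < length (u @ (c # v)) \<and> z = (t (take i (u @ (c # v))), (u @ (c # v)) ! i)"
  proof
    fix z assume "z \<in> set (replicate m (t u, c) @ zs)"
    then consider "z = (t u, c)" | "z \<in> set zs" by (auto split: if_splits)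
    then show "\<exists>i. length u \<le> i \<and> i < length (u @ (c # v)) \<and> z = (t (take i (u @ (c # v))), (u @ (c # v)) ! i)"
    proof cases
      case 1 then show ?thesis by (intro exI[of _ "length u"]) simp
    next
      case 2 then show ?thesis using v2 e by (metis Suc_leD length_append_singleton)
    qed
  qed
  ultimately show ?thesis unfolding pathok_def by blast
qed

lemma branches_advP:
  "ones u + p \<le> w \<Longrightarrow> length u + p * m \<le> d \<Longrightarrow> zs \<in> branches (advP t m \<alpha> p u)
   \<Longrightarrow> length zs \<le> m * (p * m) \<and> pathok w d t u zs"
proof (induction p arbitrary: u zs)
  case 0
  then show ?case by (auto simp: pathok_def intro!: exI[of _ "[]"])
next
  case (Suc p)
  note IHp = Suc.IH
  have R: "ones u + p + 1 \<le> w \<Longrightarrow> length u + r + p * m \<le> d \<Longrightarrow> r \<le> m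
        \<Longrightarrow> zs \<in> branches (advr t m \<alpha> r (advP t m \<alpha> p) u)
        \<Longrightarrow> length zs \<le> m * (r + p * m) \<and> pathok w d t u zs" for r u zs
  proof (induction r arbitrary: u zs)
    case 0
    then show ?case using IHp[of u zs] by simp
  next
    case (Suc r)
    have int: "internal_node w d u" using Suc.prems by (simp add: internal_node_def ones_def)
    from Suc.prems(4) consider
      (T) zs' where "zs = replicate m (t u, True) @ zs'" "zs' \<in> branches (advP t m \<alpha> p (u @ [True]))"
      | (F) zs' where "zs = replicate m (t u, False) @ zs'" "zs' \<in> branches (advr t m \<alpha> r (advP t m \<alpha> p) (u @ [False]))"
      by (auto simp: branches_app)
    then show ?case
    proof cases
      case T
      have "length zs' \<le> m * (p * m) \<and> pathok w d t (u @ [True]) zs'"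
        using Suc.prems T(2) by (intro IHp[OF _ _ T(2)]) (auto simp: ones_def)
      then show ?thesis using T(1) pathok_step[OF int] by (auto simp: algebra_simps)
    next
      case F
      have "length zs' \<le> m * (r + p * m) \<and> pathok w d t (u @ [False]) zs'"
        using Suc.prems F(2) by (intro Suc.IH) (auto simp: ones_def)
      then show ?thesis using F(1) pathok_step[OF int] by (auto simp: algebra_simps)
    qed
  qed
  have "length zs \<le> m * (m + p * m) \<and> pathok w d t u zs"
    by (rule R) (use Suc.prems in \<open>auto simp: algebra_simps\<close>)
  then show ?case by (simp add: algebra_simps)
qed

lemma M_ge:
  assumes "h \<in> H" "length xs = T"
  shows "ennreal (E1 A h xs []) \<le> M A T H"
proof -
  have "expected_mistakes A h xs \<le> (SUP xs\<in>{xs. length xs = T}. expected_mistakes A h xs)"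
    by (rule SUP_upper) (use assms in simp)
  also have "\<dots> \<le> M A T H" unfolding M_def by (rule SUP_upper) (rule assms(1))
  finally show ?thesis by (simp add: expected_mistakes_def E1_correct)
qed

lemma lower_generic:
  fixes H :: "('x \<Rightarrow> bool) set" and A :: "'x learner"
  assumes sh: "AL_shattered H w d t" and m: "1 \<le> m" and P: "P \<le> w" "P * m \<le> d" and T: "m * (P * m) \<le> T"
  shows "ennreal (real m * real P / 3) \<le> M A T H"
proof -
  define \<alpha> where "\<alpha> = 1 / (2 * real m)"
  have a0: "0 \<le> \<alpha>" "\<alpha> \<le> 1" using m by (auto simp: \<alpha>_def)
  define a where "a = advP t m \<alpha> P []"
  have "wfa a" unfolding a_def using a0 by (rule wfa_advP)
  then obtain zs where zs: "zs \<in> branches a" "val A (app [] a) [] \<le> val A (app ([] @ zs) Done) []"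
    using branch_exists by blast
  have v: "real m * real P / 3 \<le> val A a []" unfolding a_def by (rule val_advP[OF m \<alpha>_def])
  have "length zs \<le> m * (P * m) \<and> pathok w d t [] zs"
    using zs(1) P unfolding a_def by (intro branches_advP) (auto simp: ones_def)
  then have lz: "length zs \<le> T" and ok: "pathok w d t [] zs" using T by auto
  from ok obtain v where v1: "\<forall>i<length v. internal_node w d (take i v)"
    and v2: "\<forall>z\<in>set zs. \<exists>i<length v. z = (t (take i v), v ! i)"
    unfolding pathok_def by auto
  obtain h where h: "h \<in> H" "\<forall>i<length v. h (t (take i v)) = v ! i"
    using AL_ext[OF sh v1] by blast
  have real: "\<forall>z\<in>set zs. h (fst z) = snd z" using v2 h(2) by force
  then have mz: "map (\<lambda>x. (x, h x)) (map fst zs) = zs" by (induction zs) auto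
  define xs where "xs = map fst zs @ replicate (T - length zs) (t [])"
  have lxs: "length xs = T" using lz by (simp add: xs_def)
  have "real m * real P / 3 \<le> val A (app zs Done) []" using v zs(2) by simp
  also have "\<dots> = E1 A h (map fst zs) []" using val_pure[of A h "map fst zs" "[]"] mz by simp
  also have "\<dots> \<le> E1 A h xs []" unfolding xs_def by (rule E1_append)
  finally have "ennreal (real m * real P / 3) \<le> ennreal (E1 A h xs [])" by (rule ennreal_leI)
  also have "\<dots> \<le> M A T H" by (rule M_ge[OF h(1) lxs])
  finally show ?thesis .
qed

lemma eighth: "0 \<le> x \<Longrightarrow> (1/8 :: ennreal) * ennreal x = ennreal (x / 8)"
proof -
  assume x: "0 \<le> x"
  have "(1/8 :: ennreal) = ennreal (1/8)"
    by (metis divide_ennreal ennreal_1 ennreal_numeral zero_less_numeral zero_le_one)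
  then show ?thesis using x by (simp add: ennreal_mult[symmetric])
qed

lemma eff_enat:
  assumes "eff_width H = enat W"
  shows "1 \<le> W \<and> AL_dim W H < \<infinity> \<and> (\<forall>k. 1 \<le> k \<and> k < W \<longrightarrow> AL_dim k H = \<infinity>)"
proof -
  have ex: "\<exists>w\<ge>1. AL_dim w H < \<infinity>" using assms by (auto simp: eff_width_def split: if_splits)
  then have W: "W = (LEAST w. w \<ge> 1 \<and> AL_dim w H < \<infinity>)" using assms by (simp add: eff_width_def)
  have "1 \<le> W \<and> AL_dim W H < \<infinity>" unfolding W by (rule LeastI_ex) (use ex in blast)
  moreover have "AL_dim k H = \<infinity>" if "1 \<le> k" "k < W" for k
    using not_less_Least[of k "\<lambda>w. w \<ge> 1 \<and> AL_dim w H < \<infinity>"] that W by (auto simp: top_unique)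
  ultimately show ?thesis by blast
qed

lemma eff_inf:
  assumes "eff_width H = \<infinity>" "1 \<le> w"
  shows "AL_dim w H = \<infinity>"
  using assms by (auto simp: eff_width_def not_less top_unique split: if_splits)

lemma Tcase:
  fixes H :: "('x \<Rightarrow> bool) set" and A :: "'x learner"
  assumes "AL_shattered H w d t" "T \<le> w" "T \<le> d"
  shows "(1/8) * of_nat T \<le> M A T H"
proof -
  have "AL_shattered H T T t" using AL_shattered_down assms by blast
  then have L: "ennreal (real 1 * real T / 3) \<le> M A T H" by (rule lower_generic) auto
  have "(1/8) * of_nat T = ennreal (real T / 8)"
    by (simp add: ennreal_of_nat_eq_real_of_nat eighth)
  also have "\<dots> \<le> ennreal (real 1 * real T / 3)" by (intro ennreal_leI) simp
  also have "\<dots> \<le> M A T H" by (rule L)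
  finally show ?thesis .
qed

lemma LB_L:
  fixes H :: "('x \<Rightarrow> bool) set" and A :: "'x learner"
  shows "(1/8) * min (ennreal_of_enat (L_dim H)) (of_nat T) \<le> M A T H"
proof -
  obtain n where n: "n \<le> T" "enat n \<le> L_dim H" "min (ennreal_of_enat (L_dim H)) (of_nat T) = of_nat n"
  proof (cases "L_dim H")
    case (enat l)
    then show ?thesis by (intro that[of "min l T"]) (auto simp: min_def)
  next
    case infinity
    then show ?thesis by (intro that[of T]) auto
  qed
  show ?thesis
  proof (cases "n = 0")
    case True then show ?thesis using n by simp
  next
    case False
    then obtain t where "L_shattered H n t" using L_dim_obtain n(2) by blast
    then have "AL_shattered H n n t" by (simp add: L_AL)
    then have L: "ennreal (real 1 * real n / 3) \<le> M A T H" by (rule lower_generic) (use n in auto)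
    have "(1/8) * min (ennreal_of_enat (L_dim H)) (of_nat T) = (1/8) * of_nat n" using n(3) by simp
    also have "\<dots> = ennreal (real n / 8)"
      by (simp add: ennreal_of_nat_eq_real_of_nat eighth)
    also have "\<dots> \<le> ennreal (real 1 * real n / 3)" by (intro ennreal_leI) simp
    also have "\<dots> \<le> M A T H" by (rule L)
    finally show ?thesis .
  qed
qed

lemma floor_facts:
  fixes k T :: nat
  assumes k: "1 \<le> k" "k < T"
  defines "m \<equiv> nat \<lfloor>sqrt (real T / real k)\<rfloor>"
  shows "1 \<le> m" "m * (k * m) \<le> T" "sqrt (real k * real T) / 8 \<le> real m * real k / 3"
proof -
  define s where "s = sqrt (real T / real k)"
  have kp: "0 < real k" using k by simp
  have "1 \<le> real T / real k" using k by simp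
  then have s1: "1 \<le> s" unfolding s_def by simp
  have fl: "real m = of_int \<lfloor>s\<rfloor>" unfolding m_def s_def using s1 s_def by simp
  have ms: "real m \<le> s" using fl by simp
  have ms2: "s < real m + 1" using fl by linarith
  have "1 \<le> real m" using fl s1 by (simp add: one_le_floor)
  then show "1 \<le> m" by simp
  have "real m * real m \<le> s * s" using ms \<open>1 \<le> real m\<close> by (intro mult_mono) auto
  also have "s * s = real T / real k" unfolding s_def by (simp add: \<open>1 \<le> real T / real k\<close>)
  finally have "real k * (real m * real m) \<le> real T" using kp by (simp add: field_simps)
  then have "real (m * (k * m)) \<le> real T" by (simp add: algebra_simps)
  then show "m * (k * m) \<le> T" by linarith
  have half: "s / 2 \<le> real m" using ms2 \<open>1 \<le> real m\<close> by linarith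
  have "sqrt (real k * real T) = real k * s"
  proof -
    have e: "real k * real T = (real k)^2 * (real T / real k)" using kp by (simp add: power2_eq_square field_simps)
    have "sqrt (real k * real T) = sqrt ((real k)^2) * sqrt (real T / real k)"
      unfolding e by (rule real_sqrt_mult)
    then show ?thesis unfolding s_def by simp
  qed
  then have "sqrt (real k * real T) / 8 = real k * s / 8" by simp
  also have "\<dots> \<le> real k * (2 * real m) / 8" using half kp by (intro divide_right_mono mult_left_mono) auto
  also have "\<dots> \<le> real m * real k / 3" using \<open>1 \<le> real m\<close> kp by (simp add: field_simps)
  finally show "sqrt (real k * real T) / 8 \<le> real m * real k / 3" .
qed

lemma LB_S:
  fixes H :: "('x \<Rightarrow> bool) set" and A :: "'x learner"
  assumes T1: "1 \<le> T"
  shows "(1/8) * min (sqrt_term H T) (of_nat T) \<le> M A T H"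
proof (cases "eff_width H")
  case infinity
  have "AL_dim T H = \<infinity>" using eff_inf[OF infinity T1] .
  then have "\<exists>t. AL_shattered H T T t" by (intro AL_dim_obtain) (use T1 in auto)
  then obtain t where "AL_shattered H T T t" by blast
  then have "(1/8) * of_nat T \<le> M A T H" by (rule Tcase) auto
  then show ?thesis by (rule order_trans[rotated]) (intro mult_left_mono; simp)
next
  case (enat W)
  note E = eff_enat[OF enat]
  have S: "sqrt_term H T = ennreal (sqrt ((real W - 1) * real T))" by (simp add: sqrt_term_def enat)
  show ?thesis
  proof (cases "W = 1")
    case True then show ?thesis by (simp add: S)
  next
    case False
    define k where "k = W - 1"
    have W1: "1 \<le> W" using E by blast
    have k1: "1 \<le> k" using W1 False unfolding k_def by linarith
    have "k < W" using W1 unfolding k_def by linarith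
    then have kinf: "AL_dim k H = \<infinity>" using E k1 by blast
    have rk: "real W - 1 = real k" using W1 by (simp add: k_def of_nat_diff)
    show ?thesis
    proof (cases "T \<le> k")
      case True
      have "\<exists>t. AL_shattered H k T t" by (intro AL_dim_obtain) (use T1 kinf in auto)
      then obtain t where "AL_shattered H k T t" by blast
      then have "(1/8) * of_nat T \<le> M A T H" by (rule Tcase) (use True in auto)
      then show ?thesis by (rule order_trans[rotated]) (intro mult_left_mono; simp)
    next
      case False
      define m where "m = nat \<lfloor>sqrt (real T / real k)\<rfloor>"
      have F: "1 \<le> m" "m * (k * m) \<le> T" "sqrt (real k * real T) / 8 \<le> real m * real k / 3"
        using floor_facts[of k T] k1 False unfolding m_def by auto
      have "\<exists>t. AL_shattered H k (k * m) t" by (intro AL_dim_obtain) (use F(1) k1 kinf in auto)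
      then obtain t where "AL_shattered H k (k * m) t" by blast
      then have "ennreal (real m * real k / 3) \<le> M A T H" by (rule lower_generic) (use F in auto)
      moreover have "(1/8) * min (sqrt_term H T) (of_nat T) \<le> (1/8) * sqrt_term H T"
        by (intro mult_left_mono) auto
      moreover have "(1/8) * sqrt_term H T = ennreal (sqrt (real k * real T) / 8)"
        by (simp add: S rk eighth)
      moreover have "ennreal (sqrt (real k * real T) / 8) \<le> ennreal (real m * real k / 3)"
        using F(3) by (rule ennreal_leI)
      ultimately show ?thesis by (metis order_trans)
    qed
  qed
qed

theorem theorem1:
  fixes H :: "('x \<Rightarrow> bool) set" and T :: nat
  assumes "T \<ge> 1"
  shows "(1/8) * min (max (sqrt_term H T) (ennreal_of_enat (L_dim H))) (of_nat T)
           \<le> (INF A :: 'x learner. M A T H)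
       \<and> (INF A :: 'x learner. M A T H)
           \<le> (case eff_width H of
                 enat w \<Rightarrow> ennreal_of_enat (AL_dim w H) + 2 * sqrt_term H T
               | \<infinity> \<Rightarrow> \<infinity>)"
proof
  show "(1/8) * min (max (sqrt_term H T) (ennreal_of_enat (L_dim H))) (of_nat T)
           \<le> (INF A :: 'x learner. M A T H)"
  proof (rule INF_greatest)
    fix A :: "'x learner"
    show "(1/8) * min (max (sqrt_term H T) (ennreal_of_enat (L_dim H))) (of_nat T) \<le> M A T H"
    proof (cases "sqrt_term H T \<le> ennreal_of_enat (L_dim H)")
      case True
      then show ?thesis using LB_L[of H T A] by (simp add: max_def)
    next
      case False
      then show ?thesis using LB_S[OF assms, of H A] by (simp add: max_def)
    qed
  qed
next
  show "(INF A :: 'x learner. M A T H)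
           \<le> (case eff_width H of
                 enat w \<Rightarrow> ennreal_of_enat (AL_dim w H) + 2 * sqrt_term H T
               | \<infinity> \<Rightarrow> \<infinity>)"
  proof (cases "eff_width H")
    case infinity then show ?thesis by simp
  next
    case (enat W)
    note E = eff_enat[OF enat]
    obtain d where d: "AL_dim W H = enat d" using E by (cases "AL_dim W H") auto
    obtain A :: "'x learner" where A: "M A T H \<le> ennreal (real d + 2 * sqrt ((real W - 1) * real T))"
      using upper_final[of W H d T] E d assms by auto
    have W1: "1 \<le> W" using E by blast
    have eq: "ennreal (real d + 2 * sqrt ((real W - 1) * real T))
        = ennreal_of_enat (AL_dim W H) + 2 * sqrt_term H T"
    proof -
      define s where "s = sqrt ((real W - 1) * real T)"
      have s0: "0 \<le> s" using W1 by (simp add: s_def)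
      have "ennreal (real d + 2 * s) = ennreal (real d) + ennreal (2 * s)" using s0 by (intro ennreal_plus) auto
      also have "ennreal (2 * s) = ennreal 2 * ennreal s" using s0 by (intro ennreal_mult) auto
      finally show ?thesis by (simp add: s_def d sqrt_term_def enat ennreal_of_nat_eq_real_of_nat)
    qed
    have "(INF A :: 'x learner. M A T H) \<le> M A T H" by (rule INF_lower) simp
    also have "\<dots> \<le> ennreal_of_enat (AL_dim W H) + 2 * sqrt_term H T" using A eq by simp
    finally show ?thesis by (simp add: enat)
  qed
qed

end
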